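(* Let $X$ be an instance set, $f:X\to\mathcal{F}$ a feature map with $\mathcal{F}$ finite, $\mathcal{A}$ a set of algorithms with performance measure $\mathrm{cost}:\mathcal{A}\times X\to\mathbb{R}$ such that the class $\{x\mapsto\mathrm{cost}(A,x):A\in\mathcal{A}\}$ has pseudo-dimension $d$, and $\mathcal{G}$ a set of maps $g:\mathcal{F}\to\mathcal{A}$. Then the class $\{x\mapsto \mathrm{cost}(g(f(x)),x): g\in\mathcal{G}\}$ has pseudo-dimension at most $|\mathcal{F}|\,d$.
   Context: Pseudo-dimension: a finite set $\{x_1,\dots,x_m\}$ is shattered by a class $\mathcal{H}$ of real functions if there exist reals $r_i$ such that for every $T\subseteq\{1,\dots,m\}$ some $h\in\mathcal{H}$ has $h(x_i)>r_i\iff i\in T$; the pseudo-dimension is the largest size of a shattered set. *)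

theory Defs
  imports "HOL-Analysis.Analysis" "HOL-Library.Extended_Nat"
begin

definition pshatters :: "('a \<Rightarrow> real) set \<Rightarrow> 'a set \<Rightarrow> bool" where
  "pshatters H S \<longleftrightarrow> finite S \<and>
     (\<exists>r :: 'a \<Rightarrow> real. \<forall>T \<subseteq> S. \<exists>h \<in> H. \<forall>x \<in> S. (h x > r x \<longleftrightarrow> x \<in> T))"

definition pdim :: "'a set \<Rightarrow> ('a \<Rightarrow> real) set \<Rightarrow> enat" where
  "pdim X H = Sup {enat (card S) | S. S \<subseteq> X \<and> pshatters H S}"

end

theory Submission
  imports Defs
begin

theorem mainTheorem5:
  fixes X :: "'x set" and f :: "'x \<Rightarrow> 'f" and Fs :: "'f set"
    and Algs :: "'a set" and cost :: "'a \<Rightarrow> 'x \<Rightarrow> real"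
    and G :: "('f \<Rightarrow> 'a) set" and d :: nat
  assumes "finite Fs"
    and "\<forall>x \<in> X. f x \<in> Fs"
    and "\<forall>g \<in> G. \<forall>u \<in> Fs. g u \<in> Algs"
    and "pdim X ((\<lambda>A x. cost A x) ` Algs) = enat d"
  shows "pdim X ((\<lambda>g x. cost (g (f x)) x) ` G) \<le> enat (card Fs * d)"
proof -
  have bound: "card S \<le> card Fs * d"
    if S: "S \<subseteq> X" "pshatters ((\<lambda>g x. cost (g (f x)) x) ` G) S" for S
  proof -
    from S(2) have finS: "finite S" and
      sh: "\<exists>r :: 'x \<Rightarrow> real. \<forall>T \<subseteq> S. \<exists>h \<in> (\<lambda>g x. cost (g (f x)) x) ` G. \<forall>x \<in> S. (h x > r x \<longleftrightarrow> x \<in> T)"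
      unfolding pshatters_def by auto
    from sh obtain r where r: "\<forall>T \<subseteq> S. \<exists>h \<in> (\<lambda>g x. cost (g (f x)) x) ` G. \<forall>x \<in> S. (h x > r x \<longleftrightarrow> x \<in> T)" by blast
    have each: "card {x\<in>S. f x = u} \<le> d" if u: "u \<in> Fs" for u
    proof -
      let ?Su = "{x\<in>S. f x = u}"
      have "pshatters ((\<lambda>A x. cost A x) ` Algs) ?Su"
        unfolding pshatters_def
      proof (intro conjI exI allI impI)
        show "finite ?Su" using finS by simp
        fix T assume T: "T \<subseteq> ?Su"
        then have "T \<subseteq> S" by auto
        with r obtain g where g: "g \<in> G" and
          hg: "\<forall>x \<in> S. (cost (g (f x)) x > r x \<longleftrightarrow> x \<in> T)" by blast
        have "g u \<in> Algs" using assms(3) g u by blast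
        moreover have "\<forall>x \<in> ?Su. (cost (g u) x > r x \<longleftrightarrow> x \<in> T)" using hg by auto
        ultimately show "\<exists>h \<in> (\<lambda>A x. cost A x) ` Algs. \<forall>x \<in> ?Su. (h x > r x \<longleftrightarrow> x \<in> T)"
          by blast
      qed
      moreover have "?Su \<subseteq> X" using S(1) by auto
      ultimately have "enat (card ?Su) \<in> {enat (card S) | S. S \<subseteq> X \<and> pshatters ((\<lambda>A x. cost A x) ` Algs) S}"
        by blast
      then have "enat (card ?Su) \<le> pdim X ((\<lambda>A x. cost A x) ` Algs)"
        unfolding pdim_def by (rule Sup_upper)
      then show ?thesis using assms(4) by simp
    qed
    have "S = (\<Union>u\<in>Fs. {x\<in>S. f x = u})" using S(1) assms(2) by auto
    then have "card S \<le> (\<Sum>u\<in>Fs. card {x\<in>S. f x = u})"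
      by (metis card_UN_le assms(1))
    also have "\<dots> \<le> (\<Sum>u\<in>Fs. d)" by (rule sum_mono) (rule each)
    also have "\<dots> = card Fs * d" by simp
    finally show ?thesis .
  qed
  show ?thesis unfolding pdim_def
    by (rule Sup_least) (auto intro: bound)
qed

end
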